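(* Let $X,Y$ be shift spaces, $d \ge 1$, and $\phi : X \to Y$ a code such that $|\phi^{-1}(y)| = d$ for every $y \in Y$. Then the following are equivalent: (1) $\phi$ is open; (2) $\phi$ is bi-closing; (3) there exist $d$ cross sections $f_1,\dots,f_d : Y \to X$ of $\phi$ with $f_i(Y) \cap f_j(Y) = \emptyset$ for $i \ne j$ and $\bigcup_{i=1}^d f_i(Y) = X$; (4) for every $x \in X$ there is a cross section $f$ of $\phi$ with $x \in f(Y)$.
   Context: Shift spaces are closed shift-invariant subsets of $\mathcal{A}^{\mathbb{Z}}$; a code is a continuous shift-commuting map. Open: images of open sets are open. A cross section of $\phi$ is a continuous map $f : Y \to X$ with $\phi(f(y)) = y$ for all $y \in Y$. Bi-closing: $\phi$ never identifies two distinct left asymptotic points nor two distinct right asymptotic points, where $x,\bar x$ are left (right) asymptotic if $d(\sigma^{-n}x,\sigma^{-n}\bar x)\to0$ ($d(\sigma^{n}x,\sigma^{n}\bar x)\to0$), $d(x,\bar x)=2^{-k}$ with $k$ maximal such that $x_{[-k,k]}=\bar x_{[-k,k]}$. *)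

theory Defs
  imports Main
begin

text \<open>The metric d(x,x') = 2^(-k), k maximal with x,x' agreeing on [-k,k], is
  encoded through the agreement predicate: d(x,x') <= 2^(-k) iff agree k x x'.\<close>

definition agree :: "nat \<Rightarrow> (int \<Rightarrow> 'a) \<Rightarrow> (int \<Rightarrow> 'a) \<Rightarrow> bool" where
  "agree k x y \<longleftrightarrow> (\<forall>i. \<bar>i\<bar> \<le> int k \<longrightarrow> x i = y i)"

definition shiftp :: "int \<Rightarrow> (int \<Rightarrow> 'a) \<Rightarrow> (int \<Rightarrow> 'a)" where
  "shiftp n x = (\<lambda>i. x (i + n))"

definition closed_full :: "(int \<Rightarrow> 'a) set \<Rightarrow> bool" where
  "closed_full X \<longleftrightarrow> (\<forall>x. (\<forall>k. \<exists>x'\<in>X. agree k x x') \<longrightarrow> x \<in> X)"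

definition shift_space :: "(int \<Rightarrow> 'a::finite) set \<Rightarrow> bool" where
  "shift_space X \<longleftrightarrow> closed_full X \<and> (\<forall>x\<in>X. shiftp 1 x \<in> X \<and> shiftp (-1) x \<in> X)"

definition open_in_sub :: "(int \<Rightarrow> 'a) set \<Rightarrow> (int \<Rightarrow> 'a) set \<Rightarrow> bool" where
  "open_in_sub X U \<longleftrightarrow> U \<subseteq> X \<and> (\<forall>x\<in>U. \<exists>k. \<forall>x'\<in>X. agree k x x' \<longrightarrow> x' \<in> U)"

definition cont_on :: "(int \<Rightarrow> 'a) set \<Rightarrow> ((int \<Rightarrow> 'a) \<Rightarrow> (int \<Rightarrow> 'b)) \<Rightarrow> bool" where
  "cont_on X f \<longleftrightarrow> (\<forall>x\<in>X. \<forall>k. \<exists>m. \<forall>x'\<in>X. agree m x x' \<longrightarrow> agree k (f x) (f x'))"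

definition is_code :: "(int \<Rightarrow> 'a) set \<Rightarrow> (int \<Rightarrow> 'b) set \<Rightarrow> ((int \<Rightarrow> 'a) \<Rightarrow> (int \<Rightarrow> 'b)) \<Rightarrow> bool" where
  "is_code X Y \<phi> \<longleftrightarrow> \<phi> ` X \<subseteq> Y \<and> cont_on X \<phi> \<and> (\<forall>x\<in>X. \<phi> (shiftp 1 x) = shiftp 1 (\<phi> x))"

definition open_map :: "(int \<Rightarrow> 'a) set \<Rightarrow> (int \<Rightarrow> 'b) set \<Rightarrow> ((int \<Rightarrow> 'a) \<Rightarrow> (int \<Rightarrow> 'b)) \<Rightarrow> bool" where
  "open_map X Y \<phi> \<longleftrightarrow> (\<forall>U. open_in_sub X U \<longrightarrow> open_in_sub Y (\<phi> ` U))"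

definition left_asymp :: "(int \<Rightarrow> 'a) \<Rightarrow> (int \<Rightarrow> 'a) \<Rightarrow> bool" where
  "left_asymp x y \<longleftrightarrow> (\<forall>k. \<exists>N. \<forall>n\<ge>N. agree k (shiftp (- int n) x) (shiftp (- int n) y))"

definition right_asymp :: "(int \<Rightarrow> 'a) \<Rightarrow> (int \<Rightarrow> 'a) \<Rightarrow> bool" where
  "right_asymp x y \<longleftrightarrow> (\<forall>k. \<exists>N. \<forall>n\<ge>N. agree k (shiftp (int n) x) (shiftp (int n) y))"

definition bi_closing :: "(int \<Rightarrow> 'a) set \<Rightarrow> ((int \<Rightarrow> 'a) \<Rightarrow> (int \<Rightarrow> 'b)) \<Rightarrow> bool" where
  "bi_closing X \<phi> \<longleftrightarrow> (\<forall>x\<in>X. \<forall>y\<in>X. x \<noteq> y \<longrightarrow>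
      ((left_asymp x y \<longrightarrow> \<phi> x \<noteq> \<phi> y) \<and> (right_asymp x y \<longrightarrow> \<phi> x \<noteq> \<phi> y)))"

definition cross_section :: "(int \<Rightarrow> 'a) set \<Rightarrow> (int \<Rightarrow> 'b) set \<Rightarrow> ((int \<Rightarrow> 'a) \<Rightarrow> (int \<Rightarrow> 'b))
    \<Rightarrow> ((int \<Rightarrow> 'b) \<Rightarrow> (int \<Rightarrow> 'a)) \<Rightarrow> bool" where
  "cross_section X Y \<phi> f \<longleftrightarrow> f ` Y \<subseteq> X \<and> cont_on Y f \<and> (\<forall>y\<in>Y. \<phi> (f y) = y)"

end

theory Submission
  imports Defs "HOL-Library.Countable" "HOL-Library.Infinite_Set"
begin


lemma agree_refl[simp]: "agree k x x" by (simp add: agree_def)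
lemma agree_sym: "agree k x y \<Longrightarrow> agree k y x" by (simp add: agree_def)
lemma agree_trans: "agree k x y \<Longrightarrow> agree k y z \<Longrightarrow> agree k x z" by (simp add: agree_def)
lemma agree_mono: "agree k' x y \<Longrightarrow> k \<le> k' \<Longrightarrow> agree k x y" by (auto simp: agree_def)
lemma agree_all: "(\<And>k. agree k x y) \<Longrightarrow> x = y"
proof
  fix i assume "\<And>k. agree k x y"
  then have "agree (nat \<bar>i\<bar>) x y" .
  then show "x i = y i" by (simp add: agree_def)
qed

lemma agree_map: "agree k x y \<longleftrightarrow> map x [- int k..int k] = map y [- int k..int k]"
proof -
  have "agree k x y \<longleftrightarrow> (\<forall>i\<in>{- int k..int k}. x i = y i)"
    unfolding agree_def by (metis abs_le_iff atLeastAtMost_iff minus_le_iff)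
  then show ?thesis by (simp add: map_eq_conv)
qed

lemma refine_ex:
  fixes s :: "nat \<Rightarrow> int \<Rightarrow> 'c::finite"
  assumes "infinite A"
  shows "\<exists>B\<subseteq>A. infinite B \<and> (\<forall>n\<in>B. \<forall>n'\<in>B. agree k (s n) (s n'))"
proof -
  let ?f = "\<lambda>n. map (s n) [- int k..int k]"
  have "?f ` A \<subseteq> {xs. set xs \<subseteq> UNIV \<and> length xs = length [- int k..int k]}" by auto
  moreover have "finite {xs::'c list. set xs \<subseteq> UNIV \<and> length xs = length [- int k..int k]}"
    by (rule finite_lists_length_eq) simp
  ultimately have "finite (?f ` A)" by (rule finite_subset)
  from pigeonhole_infinite[OF assms this] obtain a0 where a0: "a0 \<in> A" "infinite {a\<in>A. ?f a = ?f a0}" by blast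
  show ?thesis
    by (rule exI[of _ "{a\<in>A. ?f a = ?f a0}"]) (use a0 in \<open>auto simp: agree_map\<close>)
qed

definition refine :: "(nat \<Rightarrow> int \<Rightarrow> 'c::finite) \<Rightarrow> nat set \<Rightarrow> nat \<Rightarrow> nat set" where
  "refine s A k = (SOME B. B\<subseteq>A \<and> infinite B \<and> (\<forall>n\<in>B. \<forall>n'\<in>B. agree k (s n) (s n')))"

lemma refine_prop:
  assumes "infinite A"
  shows "refine s A k \<subseteq> A \<and> infinite (refine s A k) \<and> (\<forall>n\<in>refine s A k. \<forall>n'\<in>refine s A k. agree k (s n) (s n'))"
  unfolding refine_def by (rule someI_ex) (rule refine_ex[OF assms])

primrec NN :: "(nat \<Rightarrow> int \<Rightarrow> 'c::finite) \<Rightarrow> nat \<Rightarrow> nat set" where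
  "NN s 0 = refine s UNIV 0"
| "NN s (Suc k) = refine s (NN s k) (Suc k)"

lemma NN_props: "infinite (NN s k) \<and> (\<forall>n\<in>NN s k. \<forall>n'\<in>NN s k. agree k (s n) (s n'))"
proof (induction k)
  case 0 show ?case using refine_prop[of "UNIV::nat set" s 0] by simp
next
  case (Suc k) show ?case using refine_prop[of "NN s k" s "Suc k"] Suc by simp
qed

lemma NN_mono: "k \<le> k' \<Longrightarrow> NN s k' \<subseteq> NN s k"
proof (induction k' rule: dec_induct)
  case base then show ?case by simp
next
  case (step k')
  then show ?case using refine_prop[of "NN s k'" s "Suc k'"] NN_props[of s k'] by auto
qed

lemma cluster:
  fixes s :: "nat \<Rightarrow> int \<Rightarrow> 'c::finite"
  shows "\<exists>z. \<forall>k N. \<exists>n\<ge>N. agree k (s n) z"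
proof -
  define p where "p k = (SOME n. n \<in> NN s k)" for k
  have pin: "p k \<in> NN s k" for k
    unfolding p_def using NN_props[of s k] by (metis infinite_imp_nonempty some_in_eq)
  define z where "z i = s (p (nat \<bar>i\<bar>)) i" for i
  have ag: "agree k (s n) z" if "n \<in> NN s k" for n k
    unfolding agree_def
  proof (intro allI impI)
    fix i assume "\<bar>i\<bar> \<le> int k"
    then have "NN s k \<subseteq> NN s (nat \<bar>i\<bar>)" by (intro NN_mono) auto
    with that have "n \<in> NN s (nat \<bar>i\<bar>)" by auto
    with pin NN_props[of s "nat \<bar>i\<bar>"] have "agree (nat \<bar>i\<bar>) (s n) (s (p (nat \<bar>i\<bar>)))" by blast
    then show "s n i = z i" unfolding z_def agree_def by simp
  qed
  show ?thesis
  proof (rule exI[of _ z], intro allI)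
    fix k N
    have "infinite (NN s k)" using NN_props[of s k] by blast
    then have "\<forall>m. \<exists>n\<ge>m. n \<in> NN s k" by (simp add: infinite_nat_iff_unbounded_le)
    then obtain n where "n \<in> NN s k" "n \<ge> N" by blast
    then show "\<exists>n\<ge>N. agree k (s n) z" using ag by blast
  qed
qed

lemma cluster_in:
  assumes "closed_full X" "\<forall>n. s n \<in> X" "\<forall>k N. \<exists>n\<ge>N. agree k (s n) z"
  shows "z \<in> X"
proof -
  have "\<forall>k. \<exists>x'\<in>X. agree k z x'"
  proof
    fix k
    obtain n where "agree k (s n) z" using assms(3) by blast
    then show "\<exists>x'\<in>X. agree k z x'" using assms(2) agree_sym by blast
  qed
  then show ?thesis using assms(1) unfolding closed_full_def by blast
qed



definition SEP :: "(int \<Rightarrow> 'a) set \<Rightarrow> ((int \<Rightarrow> 'a) \<Rightarrow> (int \<Rightarrow> 'b)) \<Rightarrow> nat \<Rightarrow> bool" where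
 "SEP X \<phi> K \<longleftrightarrow> (\<forall>x\<in>X. \<forall>x'\<in>X. \<phi> x = \<phi> x' \<and> agree K x x' \<longrightarrow> x = x')"

lemma shiftp_add: "shiftp a (shiftp b x) = shiftp (a+b) x"
  unfolding shiftp_def by (simp add: ac_simps)
lemma shiftp_0[simp]: "shiftp 0 x = x" by (simp add: shiftp_def)
lemma shiftp_inj: "shiftp a x = shiftp a y \<Longrightarrow> x = y"
  by (metis add.right_inverse shiftp_0 shiftp_add)

lemma shift_in_nat:
  assumes "shift_space X" "x \<in> X"
  shows "shiftp (int n) x \<in> X \<and> shiftp (- int n) x \<in> X"
proof (induction n)
  case 0 then show ?case using assms by simp
next
  case (Suc n)
  have "shiftp (int (Suc n)) x = shiftp 1 (shiftp (int n) x)" by (simp add: shiftp_add add.commute)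
  moreover have "shiftp (- int (Suc n)) x = shiftp (-1) (shiftp (- int n) x)" by (simp add: shiftp_add)
  ultimately show ?case using Suc assms(1) unfolding shift_space_def by auto
qed

lemma shift_in:
  assumes "shift_space X" "x \<in> X"
  shows "shiftp n x \<in> X"
proof (cases "n \<ge> 0")
  case True then obtain m where "n = int m" using nonneg_eq_int by blast
  then show ?thesis using shift_in_nat[OF assms] by simp
next
  case False then obtain m where "n = - int m" by (metis minus_minus nonneg_eq_int neg_0_le_iff_le not_le less_imp_le)
  then show ?thesis using shift_in_nat[OF assms] by simp
qed

lemma code_shift_nat:
  assumes "shift_space X" "is_code X Y \<phi>" "x \<in> X"
  shows "\<phi> (shiftp (int n) x) = shiftp (int n) (\<phi> x) \<and> \<phi> (shiftp (- int n) x) = shiftp (- int n) (\<phi> x)"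
proof (induction n)
  case 0 then show ?case by simp
next
  case (Suc n)
  have c1: "\<phi> (shiftp 1 w) = shiftp 1 (\<phi> w)" if "w \<in> X" for w
    using assms(2) that unfolding is_code_def by blast
  have c2: "\<phi> (shiftp (-1) w) = shiftp (-1) (\<phi> w)" if "w \<in> X" for w
  proof -
    have "shiftp (-1) w \<in> X" using assms(1) that unfolding shift_space_def by blast
    then have "\<phi> (shiftp 1 (shiftp (-1) w)) = shiftp 1 (\<phi> (shiftp (-1) w))" by (rule c1)
    then have "\<phi> w = shiftp 1 (\<phi> (shiftp (-1) w))" by (simp add: shiftp_add)
    then have "shiftp (-1) (\<phi> w) = \<phi> (shiftp (-1) w)" by (simp add: shiftp_add)
    then show ?thesis by simp
  qed
  have e1: "shiftp (int (Suc n)) w = shiftp 1 (shiftp (int n) w)" for w :: "int \<Rightarrow> 'b" by (simp add: shiftp_add add.commute)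
  have e1': "shiftp (int (Suc n)) w = shiftp 1 (shiftp (int n) w)" for w :: "int \<Rightarrow> 'a" by (simp add: shiftp_add add.commute)
  have e2: "shiftp (- int (Suc n)) w = shiftp (-1) (shiftp (- int n) w)" for w :: "int \<Rightarrow> 'b" by (simp add: shiftp_add)
  have e2': "shiftp (- int (Suc n)) w = shiftp (-1) (shiftp (- int n) w)" for w :: "int \<Rightarrow> 'a" by (simp add: shiftp_add)
  have i: "shiftp (int n) x \<in> X" "shiftp (- int n) x \<in> X" using shift_in[OF assms(1,3)] by auto
  show ?case
    unfolding e1 e1' e2 e2' using c1[OF i(1)] c2[OF i(2)] Suc by simp
qed

lemma code_shift:
  assumes "shift_space X" "is_code X Y \<phi>" "x \<in> X"
  shows "\<phi> (shiftp n x) = shiftp n (\<phi> x)"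
proof (cases "n \<ge> 0")
  case True then obtain m where "n = int m" using nonneg_eq_int by blast
  then show ?thesis using code_shift_nat[OF assms] by simp
next
  case False then obtain m where "n = - int m" by (metis minus_minus nonneg_eq_int neg_0_le_iff_le not_le less_imp_le)
  then show ?thesis using code_shift_nat[OF assms] by simp
qed



context
  fixes X :: "(int \<Rightarrow> 'a::finite) set" and Y :: "(int \<Rightarrow> 'b::finite) set"
    and \<phi> :: "(int \<Rightarrow> 'a) \<Rightarrow> (int \<Rightarrow> 'b)" and d :: nat
  assumes X: "shift_space X" and Y: "shift_space Y" and d: "d \<ge> 1"
    and code: "is_code X Y \<phi>"
    and card: "\<forall>y\<in>Y. card {x\<in>X. \<phi> x = y} = d"
begin

lemma phiY: "x \<in> X \<Longrightarrow> \<phi> x \<in> Y" using code unfolding is_code_def by blast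
lemma phicont: "x \<in> X \<Longrightarrow> \<exists>m. \<forall>x'\<in>X. agree m x x' \<longrightarrow> agree k (\<phi> x) (\<phi> x')"
  using code unfolding is_code_def cont_on_def by blast
lemma fin_fiber: "y \<in> Y \<Longrightarrow> finite {x\<in>X. \<phi> x = y}"
  using card d by (metis card.infinite not_one_le_zero)

lemma limit_img:
  assumes s: "\<forall>n. s n \<in> X" and z: "z \<in> X" and cl: "\<forall>k N. \<exists>n\<ge>N. agree k (s n) z"
    and lim: "\<forall>n. agree n y (\<phi> (s n))"
  shows "\<phi> z = y"
proof (rule agree_all)
  fix k
  obtain m where m: "\<forall>x'\<in>X. agree m z x' \<longrightarrow> agree k (\<phi> z) (\<phi> x')" using phicont[OF z] by blast
  obtain n where n: "n \<ge> k" "agree m (s n) z" using cl by blast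
  have "agree k (\<phi> z) (\<phi> (s n))" using m s n(2) agree_sym by blast
  moreover have "agree k y (\<phi> (s n))" using lim agree_mono n(1) by blast
  ultimately show "agree k (\<phi> z) y" using agree_sym agree_trans by blast
qed


lemma L_F:
  assumes "\<forall>x\<in>X. \<exists>f. cross_section X Y \<phi> f \<and> x \<in> f ` Y"
  shows "open_map X Y \<phi>"
  unfolding open_map_def
proof (intro allI impI)
  fix U assume U: "open_in_sub X U"
  show "open_in_sub Y (\<phi> ` U)"
    unfolding open_in_sub_def
  proof (intro conjI ballI)
    show "\<phi> ` U \<subseteq> Y" using U phiY unfolding open_in_sub_def by blast
  next
    fix y assume "y \<in> \<phi> ` U"
    then obtain x where x: "x \<in> U" "y = \<phi> x" by blast
    have xX: "x \<in> X" using U x unfolding open_in_sub_def by blast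
    obtain k where k: "\<forall>x'\<in>X. agree k x x' \<longrightarrow> x' \<in> U" using U x unfolding open_in_sub_def by blast
    obtain f y0 where f: "cross_section X Y \<phi> f" "y0 \<in> Y" "x = f y0" using assms xX by blast
    have "y0 = y" using f x unfolding cross_section_def by auto
    obtain m where m: "\<forall>y'\<in>Y. agree m y y' \<longrightarrow> agree k (f y) (f y')"
      using f \<open>y0 = y\<close> unfolding cross_section_def cont_on_def by blast
    show "\<exists>m. \<forall>y'\<in>Y. agree m y y' \<longrightarrow> y' \<in> \<phi> ` U"
    proof (intro exI ballI impI)
      fix y' assume "y' \<in> Y" "agree m y y'"
      then have "agree k x (f y')" using m f \<open>y0 = y\<close> by blast
      moreover have "f y' \<in> X" "\<phi> (f y') = y'" using f \<open>y' \<in> Y\<close> unfolding cross_section_def by auto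
      ultimately show "y' \<in> \<phi> ` U" using k by (metis image_eqI)
    qed
  qed
qed

lemma L_E:
  assumes "(\<forall>i\<in>{1..d}. cross_section X Y \<phi> (f i)) \<and> (\<Union>i\<in>{1..d}. f i ` Y) = X"
  shows "\<forall>x\<in>X. \<exists>f. cross_section X Y \<phi> f \<and> x \<in> f ` Y"
  using assms by blast

lemma L_B:
  assumes "SEP X \<phi> K"
  shows "bi_closing X \<phi>"
  unfolding bi_closing_def
proof (intro ballI impI conjI)
  fix x y assume xy: "x \<in> X" "y \<in> X" "x \<noteq> y"
  have key: "\<phi> x \<noteq> \<phi> y" if "agree K (shiftp n x) (shiftp n y)" for n
  proof
    assume eq: "\<phi> x = \<phi> y"
    have "\<phi> (shiftp n x) = \<phi> (shiftp n y)" using code_shift[OF X code] xy eq by simp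
    then have "shiftp n x = shiftp n y" using assms that shift_in[OF X] xy unfolding SEP_def by blast
    then show False using shiftp_inj xy by blast
  qed
  show "left_asymp x y \<Longrightarrow> \<phi> x \<noteq> \<phi> y" unfolding left_asymp_def using key by blast
  show "right_asymp x y \<Longrightarrow> \<phi> x \<noteq> \<phi> y" unfolding right_asymp_def using key by blast
qed

end


context
  fixes X :: "(int \<Rightarrow> 'a::finite) set" and Y :: "(int \<Rightarrow> 'b::finite) set"
    and \<phi> :: "(int \<Rightarrow> 'a) \<Rightarrow> (int \<Rightarrow> 'b)" and d :: nat
  assumes X: "shift_space X" and Y: "shift_space Y" and d: "d \<ge> 1"
    and code: "is_code X Y \<phi>"
    and card: "\<forall>y\<in>Y. card {x\<in>X. \<phi> x = y} = d"
begin

lemma finite_sep: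
  assumes "finite F"
  shows "\<exists>k0. \<forall>a\<in>F. \<forall>b\<in>F. a \<noteq> b \<longrightarrow> \<not> agree k0 a b"
proof -
  define g where "g p = (SOME k. \<not> agree k (fst p) (snd p))" for p :: "(int \<Rightarrow> 'c) \<times> (int \<Rightarrow> 'c)"
  define k0 where "k0 = Max (insert 0 (g ` {p\<in>F\<times>F. fst p \<noteq> snd p}))"
  have fin: "finite (insert 0 (g ` {p\<in>F\<times>F. fst p \<noteq> snd p}))" using assms by auto
  show ?thesis
  proof (intro exI ballI impI)
    fix a b assume ab: "a \<in> F" "b \<in> F" "a \<noteq> b"
    have "\<exists>k. \<not> agree k a b" using agree_all ab(3) by blast
    then have "\<not> agree (g (a,b)) a b" unfolding g_def fst_conv snd_conv by (rule someI_ex)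
    moreover have "g (a,b) \<le> k0" unfolding k0_def using fin ab by (intro Max_ge) auto
    ultimately show "\<not> agree k0 a b" using agree_mono by blast
  qed
qed

lemma local_open:
  assumes op: "open_map X Y \<phi>" and z: "z \<in> X"
  shows "\<exists>k0 m. \<forall>x\<in>X. \<forall>x'\<in>X. \<phi> x = \<phi> x' \<and> agree m (\<phi> z) (\<phi> x) \<and> agree k0 z x \<and> agree k0 z x' \<longrightarrow> x = x'"
proof -
  define y where "y = \<phi> z"
  define F where "F = {x\<in>X. \<phi> x = y}"
  have yY: "y \<in> Y" using phiY[OF X Y d code card] z y_def by blast
  have finF: "finite F" "card F = d" using fin_fiber[OF X Y d code card yY] card yY F_def by auto
  have zF: "z \<in> F" using z y_def F_def by simp
  obtain k0 where k0: "\<forall>a\<in>F. \<forall>b\<in>F. a \<noteq> b \<longrightarrow> \<not> agree k0 a b" using finite_sep[OF finF(1)] by blast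
  define U where "U a = {x'\<in>X. agree k0 a x'}" for a
  have Uo: "open_in_sub X (U a)" for a
    unfolding open_in_sub_def U_def using agree_trans by blast
  have "\<exists>m. \<forall>y'\<in>Y. agree m y y' \<longrightarrow> y' \<in> \<phi> ` U a" if "a \<in> F" for a
  proof -
    have "open_in_sub Y (\<phi> ` U a)" using op Uo unfolding open_map_def by blast
    moreover have "y \<in> \<phi> ` U a" using that unfolding F_def U_def by auto
    ultimately show ?thesis unfolding open_in_sub_def by blast
  qed
  then obtain M where M: "\<And>a. a \<in> F \<Longrightarrow> \<forall>y'\<in>Y. agree (M a) y y' \<longrightarrow> y' \<in> \<phi> ` U a" by metis
  define m where "m = Max (M ` F)"
  show ?thesis
  proof (intro exI ballI impI)
    fix x x' assume xx: "x \<in> X" "x' \<in> X" and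
      H: "\<phi> x = \<phi> x' \<and> agree m (\<phi> z) (\<phi> x) \<and> agree k0 z x \<and> agree k0 z x'"
    define y' where "y' = \<phi> x"
    have y'Y: "y' \<in> Y" using phiY[OF X Y d code card] xx y'_def by blast
    define G where "G = {w\<in>X. \<phi> w = y'}"
    have finG: "finite G" "card G = d" using fin_fiber[OF X Y d code card y'Y] card y'Y G_def by auto
    have "\<exists>w. w \<in> U a \<and> \<phi> w = y'" if "a \<in> F" for a
    proof -
      have "M a \<le> m" unfolding m_def using finF that by auto
      then have "agree (M a) y y'" using H agree_mono y_def y'_def by blast
      then show ?thesis using M that y'Y by fastforce
    qed
    then obtain h where h: "\<And>a. a \<in> F \<Longrightarrow> h a \<in> U a \<and> \<phi> (h a) = y'" by metis
    have inj: "inj_on h F"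
    proof (rule inj_onI)
      fix a b assume ab: "a \<in> F" "b \<in> F" "h a = h b"
      have h1: "agree k0 a (h a)" using h ab(1) unfolding U_def by auto
      have h2: "agree k0 b (h b)" using h ab(2) unfolding U_def by auto
      have "agree k0 b (h a)" using h2 ab(3) by simp
      then have "agree k0 a b" using agree_trans[OF h1 agree_sym] by blast
      then show "a = b" using k0 ab by blast
    qed
    have sub: "h ` F \<subseteq> G" using h unfolding G_def U_def by auto
    have "card (h ` F) = card G" using card_image[OF inj] finF finG by simp
    then have eq: "h ` F = G" using card_subset_eq[OF finG(1) sub] by simp
    have xG: "x \<in> G" "x' \<in> G" using xx H y'_def G_def by auto
    obtain a where a: "a \<in> F" "x = h a" using xG eq by blast
    obtain b where b: "b \<in> F" "x' = h b" using xG eq by blast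
    have "agree k0 a x" using h a unfolding U_def by auto
    moreover have "agree k0 x z" using H agree_sym by blast
    ultimately have "agree k0 a z" by (rule agree_trans)
    then have "a = z" using k0 a zF by blast
    have "agree k0 b x'" using h b unfolding U_def by auto
    moreover have "agree k0 x' z" using H agree_sym by blast
    ultimately have "agree k0 b z" by (rule agree_trans)
    then have "b = z" using k0 b zF by blast
    show "x = x'" using a b \<open>a = z\<close> \<open>b = z\<close> by simp
  qed
qed

lemma L_C:
  assumes op: "open_map X Y \<phi>"
  shows "\<exists>K. SEP X \<phi> K"
proof (rule ccontr)
  assume "\<nexists>K. SEP X \<phi> K"
  then have h0: "\<forall>K. \<exists>x\<in>X. \<exists>x'\<in>X. \<phi> x = \<phi> x' \<and> agree K x x' \<and> x \<noteq> x'"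
    by (auto simp: SEP_def)
  have "\<forall>K. \<exists>p. fst p \<in> X \<and> snd p \<in> X \<and> \<phi> (fst p) = \<phi> (snd p) \<and> agree K (fst p) (snd p) \<and> fst p \<noteq> snd p"
  proof
    fix K
    from h0 obtain x x' where "x \<in> X" "x' \<in> X" "\<phi> x = \<phi> x'" "agree K x x'" "x \<noteq> x'" by blast
    then show "\<exists>p. fst p \<in> X \<and> snd p \<in> X \<and> \<phi> (fst p) = \<phi> (snd p) \<and> agree K (fst p) (snd p) \<and> fst p \<noteq> snd p"
      by (intro exI[of _ "(x,x')"]) simp
  qed
  then obtain P where P: "\<And>K. fst (P K) \<in> X \<and> snd (P K) \<in> X \<and> \<phi> (fst (P K)) = \<phi> (snd (P K)) \<and> agree K (fst (P K)) (snd (P K)) \<and> fst (P K) \<noteq> snd (P K)"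
    by metis
  define s where "s K = fst (P K)" for K
  obtain z where z: "\<forall>k N. \<exists>n\<ge>N. agree k (s n) z" using cluster by blast
  have cX: "closed_full X" using X unfolding shift_space_def by blast
  have sX: "\<forall>n. s n \<in> X" using P s_def by auto
  have zX: "z \<in> X" using cluster_in[OF cX sX z] .
  obtain k0 m where loc: "\<forall>x\<in>X. \<forall>x'\<in>X. \<phi> x = \<phi> x' \<and> agree m (\<phi> z) (\<phi> x) \<and> agree k0 z x \<and> agree k0 z x' \<longrightarrow> x = x'"
    using local_open[OF op zX] by blast
  obtain m' where m': "\<forall>x'\<in>X. agree m' z x' \<longrightarrow> agree m (\<phi> z) (\<phi> x')" using phicont[OF X Y d code card zX] by blast
  obtain n where n: "n \<ge> max k0 m'" "agree (max k0 m') (s n) z" using z by blast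
  have a1: "agree k0 z (s n)" "agree m' z (s n)" using n(2) agree_sym agree_mono by fastforce+
  have "agree k0 (s n) (snd (P n))" using P[of n] n(1) agree_mono s_def by fastforce
  then have a2: "agree k0 z (snd (P n))" using a1 agree_trans by blast
  have "s n = snd (P n)" using loc P[of n] s_def a1 a2 m' by auto
  then show False using P[of n] s_def by simp
qed

end


lemma first_diff:
  fixes x x' :: "int \<Rightarrow> 'a"
  assumes "x \<noteq> x'" "agree K x x'"
  shows "\<exists>p. x p \<noteq> x' p \<and> \<bar>p\<bar> > int K \<and> (\<forall>i. \<bar>i\<bar> < \<bar>p\<bar> \<longrightarrow> x i = x' i)"
proof -
  define Q where "Q j \<longleftrightarrow> x (int j) \<noteq> x' (int j) \<or> x (- int j) \<noteq> x' (- int j)" for j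
  obtain i where i: "x i \<noteq> x' i" using assms(1) by blast
  have "Q (nat \<bar>i\<bar>)" unfolding Q_def using i by (cases "i \<ge> 0") auto
  define q where "q = (LEAST j. Q j)"
  have Qq: "Q q" unfolding q_def by (rule LeastI) fact
  have min: "x i = x' i" if "\<bar>i\<bar> < int q" for i
  proof (rule ccontr)
    assume "x i \<noteq> x' i"
    then have "Q (nat \<bar>i\<bar>)" unfolding Q_def by (cases "i \<ge> 0") auto
    then have "q \<le> nat \<bar>i\<bar>" unfolding q_def by (rule Least_le)
    then show False using that by linarith
  qed
  define p where "p = (if x (int q) \<noteq> x' (int q) then int q else - int q)"
  have dp: "x p \<noteq> x' p" using Qq unfolding p_def Q_def by auto
  have ap: "\<bar>p\<bar> = int q" unfolding p_def by auto
  have "\<bar>p\<bar> > int K"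
  proof (rule ccontr)
    assume "\<not> \<bar>p\<bar> > int K"
    then show False using assms(2) dp unfolding agree_def by auto
  qed
  then show ?thesis using dp ap min by auto
qed

context
  fixes X :: "(int \<Rightarrow> 'a::finite) set" and Y :: "(int \<Rightarrow> 'b::finite) set"
    and \<phi> :: "(int \<Rightarrow> 'a) \<Rightarrow> (int \<Rightarrow> 'b)" and d :: nat
  assumes X: "shift_space X" and Y: "shift_space Y" and d: "d \<ge> 1"
    and code: "is_code X Y \<phi>"
    and card: "\<forall>y\<in>Y. card {x\<in>X. \<phi> x = y} = d"
begin

lemma L_A:
  assumes bc: "bi_closing X \<phi>"
  shows "\<exists>K. SEP X \<phi> K"
proof (rule ccontr)
  assume "\<nexists>K. SEP X \<phi> K"
  then have h0: "\<forall>K. \<exists>x\<in>X. \<exists>x'\<in>X. \<phi> x = \<phi> x' \<and> agree K x x' \<and> x \<noteq> x'"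
    by (auto simp: SEP_def)
  have "\<forall>K. \<exists>p. fst p \<in> X \<and> snd p \<in> X \<and> \<phi> (fst p) = \<phi> (snd p) \<and> fst p 0 \<noteq> snd p 0 \<and>
     ((\<forall>j. 1 \<le> j \<and> j \<le> int K \<longrightarrow> fst p (-j) = snd p (-j)) \<or> (\<forall>j. 1 \<le> j \<and> j \<le> int K \<longrightarrow> fst p j = snd p j))"
  proof
    fix K
    from h0 obtain x x' where xx: "x \<in> X" "x' \<in> X" "\<phi> x = \<phi> x'" "agree K x x'" "x \<noteq> x'" by blast
    obtain p where p: "x p \<noteq> x' p" "\<bar>p\<bar> > int K" "\<forall>i. \<bar>i\<bar> < \<bar>p\<bar> \<longrightarrow> x i = x' i"
      using first_diff[OF xx(5,4)] by blast
    define w where "w = shiftp p x"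
    define w' where "w' = shiftp p x'"
    have wX: "w \<in> X" "w' \<in> X" using shift_in[OF X] xx unfolding w_def w'_def by auto
    have wphi: "\<phi> w = \<phi> w'" using code_shift[OF X code] xx unfolding w_def w'_def by simp
    have w0: "w 0 \<noteq> w' 0" using p unfolding w_def w'_def shiftp_def by simp
    have side: "(\<forall>j. 1 \<le> j \<and> j \<le> int K \<longrightarrow> w (-j) = w' (-j)) \<or> (\<forall>j. 1 \<le> j \<and> j \<le> int K \<longrightarrow> w j = w' j)"
    proof (cases "p > 0")
      case True
      have "w (-j) = w' (-j)" if "1 \<le> j" "j \<le> int K" for j
        unfolding w_def w'_def shiftp_def using p(3) p(2) that True by (intro p(3)[rule_format]) auto
      then show ?thesis by blast
    next
      case False
      have "w j = w' j" if "1 \<le> j" "j \<le> int K" for j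
        unfolding w_def w'_def shiftp_def using p(3) p(2) that False by (intro p(3)[rule_format]) auto
      then show ?thesis by blast
    qed
    show "\<exists>p. fst p \<in> X \<and> snd p \<in> X \<and> \<phi> (fst p) = \<phi> (snd p) \<and> fst p 0 \<noteq> snd p 0 \<and>
     ((\<forall>j. 1 \<le> j \<and> j \<le> int K \<longrightarrow> fst p (-j) = snd p (-j)) \<or> (\<forall>j. 1 \<le> j \<and> j \<le> int K \<longrightarrow> fst p j = snd p j))"
      by (rule exI[of _ "(w, w')"]) (use wX wphi w0 side in simp)
  qed
  then obtain P where P: "\<And>K. fst (P K) \<in> X \<and> snd (P K) \<in> X \<and> \<phi> (fst (P K)) = \<phi> (snd (P K)) \<and> fst (P K) 0 \<noteq> snd (P K) 0 \<and>
     ((\<forall>j. 1 \<le> j \<and> j \<le> int K \<longrightarrow> fst (P K) (-j) = snd (P K) (-j)) \<or> (\<forall>j. 1 \<le> j \<and> j \<le> int K \<longrightarrow> fst (P K) j = snd (P K) j))"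
    by metis
  define w where "w K = fst (P K)" for K
  define w' where "w' K = snd (P K)" for K
  define s where "s K = (\<lambda>i. (w K i, w' K i))" for K
  obtain c where c: "\<forall>k N. \<exists>n\<ge>N. agree k (s n) c" using cluster by blast
  define z where "z i = fst (c i)" for i
  define z' where "z' i = snd (c i)" for i
  have ag: "agree k (w n) z \<and> agree k (w' n) z'" if "agree k (s n) c" for k n
    using that unfolding agree_def s_def z_def z'_def by (metis fst_conv snd_conv)
  have clw: "\<forall>k N. \<exists>n\<ge>N. agree k (w n) z" and clw': "\<forall>k N. \<exists>n\<ge>N. agree k (w' n) z'"
    using c ag by blast+
  have cX: "closed_full X" using X unfolding shift_space_def by blast
  have wX: "\<forall>n. w n \<in> X" "\<forall>n. w' n \<in> X" using P w_def w'_def by auto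
  have zX: "z \<in> X" using cluster_in[OF cX wX(1) clw] .
  have z'X: "z' \<in> X" using cluster_in[OF cX wX(2) clw'] .
  have phieq: "\<phi> z = \<phi> z'"
  proof (rule agree_all)
    fix k
    obtain m1 where m1: "\<forall>x'\<in>X. agree m1 z x' \<longrightarrow> agree k (\<phi> z) (\<phi> x')" using phicont[OF X Y d code card zX] by blast
    obtain m2 where m2: "\<forall>x'\<in>X. agree m2 z' x' \<longrightarrow> agree k (\<phi> z') (\<phi> x')" using phicont[OF X Y d code card z'X] by blast
    obtain n where "agree (max m1 m2) (s n) c" using c by blast
    then have a0: "agree (max m1 m2) (w n) z" "agree (max m1 m2) (w' n) z'" using ag by blast+
    have a1: "agree m1 z (w n)" using agree_sym[OF agree_mono[OF a0(1), of m1]] by simp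
    have a2: "agree m2 z' (w' n)" using agree_sym[OF agree_mono[OF a0(2), of m2]] by simp
    have b1: "agree k (\<phi> z) (\<phi> (w n))" using m1 a1 wX by blast
    have b2: "agree k (\<phi> z') (\<phi> (w' n))" using m2 a2 wX by blast
    have "\<phi> (w n) = \<phi> (w' n)" using P w_def w'_def by simp
    with b2 have "agree k (\<phi> (w n)) (\<phi> z')" using agree_sym by simp
    with b1 show "agree k (\<phi> z) (\<phi> z')" by (rule agree_trans)
  qed
  have zne: "z \<noteq> z'"
  proof
    assume "z = z'"
    obtain n where "agree 0 (s n) c" using c by blast
    then have "agree 0 (w n) z" "agree 0 (w' n) z'" using ag by blast+
    then have "w n 0 = z 0" "w' n 0 = z' 0" unfolding agree_def by auto
    then show False using P[of n] w_def w'_def \<open>z = z'\<close> by simp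
  qed
  have sides: "(\<forall>j. 1 \<le> j \<longrightarrow> z (-j) = z' (-j)) \<or> (\<forall>j. 1 \<le> j \<longrightarrow> z j = z' j)"
  proof (rule ccontr)
    assume "\<not> ?thesis"
    then obtain a b where ab: "1 \<le> a" "z (-a) \<noteq> z' (-a)" "1 \<le> b" "z b \<noteq> z' b" by blast
    define k where "k = nat (max a b)"
    obtain n where n: "n \<ge> k" "agree k (s n) c" using c by blast
    then have "agree k (w n) z" "agree k (w' n) z'" using ag by blast+
    then have A1: "\<forall>i. \<bar>i\<bar> \<le> int k \<longrightarrow> w n i = z i" and A2: "\<forall>i. \<bar>i\<bar> \<le> int k \<longrightarrow> w' n i = z' i"
      unfolding agree_def by blast+
    have ka: "\<bar>-a\<bar> \<le> int k" "\<bar>b\<bar> \<le> int k" using ab unfolding k_def by auto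
    have e: "w n (-a) = z (-a)" "w' n (-a) = z' (-a)" "w n b = z b" "w' n b = z' b"
      using A1 A2 ka by blast+
    have "a \<le> int n" "b \<le> int n" using n(1) k_def by auto
    then show False using P[of n] e ab w_def w'_def by auto
  qed
  have "left_asymp z z' \<or> right_asymp z z'"
    using sides
  proof
    assume H: "\<forall>j. 1 \<le> j \<longrightarrow> z (-j) = z' (-j)"
    have "left_asymp z z'" unfolding left_asymp_def
    proof (rule allI)
      fix k
      show "\<exists>N. \<forall>n\<ge>N. agree k (shiftp (- int n) z) (shiftp (- int n) z')"
      proof (rule exI[of _ "Suc k"], intro allI impI)
        fix n assume "n \<ge> Suc k"
        show "agree k (shiftp (- int n) z) (shiftp (- int n) z')" unfolding agree_def shiftp_def
        proof (intro allI impI)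
          fix i assume "\<bar>i\<bar> \<le> int k"
          then have "1 \<le> int n - i" using \<open>n \<ge> Suc k\<close> by linarith
          then have "z (- (int n - i)) = z' (- (int n - i))" using H by blast
          then show "z (i + - int n) = z' (i + - int n)" by (simp add: algebra_simps)
        qed
      qed
    qed
    then show ?thesis by blast
  next
    assume H: "\<forall>j. 1 \<le> j \<longrightarrow> z j = z' j"
    have "right_asymp z z'" unfolding right_asymp_def
    proof (rule allI)
      fix k
      show "\<exists>N. \<forall>n\<ge>N. agree k (shiftp (int n) z) (shiftp (int n) z')"
      proof (rule exI[of _ "Suc k"], intro allI impI)
        fix n assume "n \<ge> Suc k"
        show "agree k (shiftp (int n) z) (shiftp (int n) z')" unfolding agree_def shiftp_def
        proof (intro allI impI)
          fix i assume "\<bar>i\<bar> \<le> int k"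
          then have "1 \<le> i + int n" using \<open>n \<ge> Suc k\<close> by linarith
          then show "z (i + int n) = z' (i + int n)" using H by blast
        qed
      qed
    qed
    then show ?thesis by blast
  qed
  then show False using bc zX z'X zne phieq unfolding bi_closing_def by blast
qed

end


definition patK :: "nat \<Rightarrow> (int \<Rightarrow> 'a) \<Rightarrow> 'a list" where
  "patK K x = map x [- int K..int K]"

lemma patK_eq: "patK K x = patK K x' \<longleftrightarrow> agree K x x'"
  unfolding patK_def using agree_map by metis

definition encL :: "'a::countable list set \<Rightarrow> nat list" where
  "encL P = sorted_list_of_set (to_nat ` P)"

definition secf :: "(int \<Rightarrow> 'a::finite) set \<Rightarrow> ((int \<Rightarrow> 'a) \<Rightarrow> (int \<Rightarrow> 'b)) \<Rightarrow> nat \<Rightarrow> nat \<Rightarrow> (int \<Rightarrow> 'b) \<Rightarrow> (int \<Rightarrow> 'a)" where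
  "secf X \<phi> K i y = (THE x. x \<in> {x\<in>X. \<phi> x = y} \<and> to_nat (patK K x) = encL (patK K ` {x\<in>X. \<phi> x = y}) ! (i - 1))"

context
  fixes X :: "(int \<Rightarrow> 'a::finite) set" and Y :: "(int \<Rightarrow> 'b::finite) set"
    and \<phi> :: "(int \<Rightarrow> 'a) \<Rightarrow> (int \<Rightarrow> 'b)" and d :: nat and K :: nat
  assumes X: "shift_space X" and Y: "shift_space Y" and d: "d \<ge> 1"
    and code: "is_code X Y \<phi>"
    and card: "\<forall>y\<in>Y. card {x\<in>X. \<phi> x = y} = d"
    and sep: "SEP X \<phi> K"
begin

abbreviation "fib y \<equiv> {x\<in>X. \<phi> x = y}"

lemma sepD: "x \<in> X \<Longrightarrow> x' \<in> X \<Longrightarrow> \<phi> x = \<phi> x' \<Longrightarrow> agree K x x' \<Longrightarrow> x = x'"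
  using sep unfolding SEP_def by blast

lemma inj_pat: "inj_on (patK K) (fib y)"
  by (rule inj_onI) (auto simp: patK_eq intro: sepD)

lemma card_pat: "y \<in> Y \<Longrightarrow> card (patK K ` fib y) = d \<and> finite (patK K ` fib y)"
  using card_image[OF inj_pat] card fin_fiber[OF X Y d code card] by auto

lemma E_loc:
  assumes yY: "y \<in> Y"
  shows "\<exists>m. \<forall>y'\<in>Y. agree m y y' \<longrightarrow> patK K ` fib y' = patK K ` fib y"
proof -
  have "\<exists>m. \<forall>y'\<in>Y. agree m y y' \<longrightarrow> patK K ` fib y' \<subseteq> patK K ` fib y"
  proof (rule ccontr)
    assume "\<not> ?thesis"
    then have "\<forall>m. \<exists>x'. x' \<in> X \<and> agree m y (\<phi> x') \<and> patK K x' \<notin> patK K ` fib y" by blast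
    from choice[OF this] obtain s where s0: "\<forall>m. s m \<in> X \<and> agree m y (\<phi> (s m)) \<and> patK K (s m) \<notin> patK K ` fib y" by blast
    have s: "\<And>m. s m \<in> X \<and> agree m y (\<phi> (s m)) \<and> patK K (s m) \<notin> patK K ` fib y" using s0 by blast
    obtain z where z: "\<forall>k N. \<exists>n\<ge>N. agree k (s n) z" using cluster by blast
    have cX: "closed_full X" using X unfolding shift_space_def by blast
    have sX: "\<forall>n. s n \<in> X" using s0 by blast
    have zX: "z \<in> X" using cluster_in[OF cX sX z] .
    have sl: "\<forall>n. agree n y (\<phi> (s n))" using s0 by blast
    have "\<phi> z = y" using limit_img[OF X Y d code card sX zX z sl] .
    obtain n where "agree K (s n) z" using z by blast
    then have "patK K (s n) = patK K z" by (simp add: patK_eq)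
    then show False using s[of n] zX \<open>\<phi> z = y\<close> by auto
  qed
  then obtain m where m: "\<forall>y'\<in>Y. agree m y y' \<longrightarrow> patK K ` fib y' \<subseteq> patK K ` fib y" by blast
  show ?thesis
  proof (intro exI ballI impI)
    fix y' assume "y' \<in> Y" "agree m y y'"
    then have sub: "patK K ` fib y' \<subseteq> patK K ` fib y" using m by blast
    have c1: "card (patK K ` fib y') = card (patK K ` fib y)" using card_pat[OF yY] card_pat[OF \<open>y' \<in> Y\<close>] by simp
    have f1: "finite (patK K ` fib y)" using card_pat[OF yY] by blast
    show "patK K ` fib y' = patK K ` fib y" using card_subset_eq[OF f1 sub c1] .
  qed
qed

lemma P_loc:
  assumes xX: "x \<in> X"
  shows "\<exists>m. \<forall>x'\<in>X. agree m (\<phi> x) (\<phi> x') \<and> agree K x x' \<longrightarrow> agree k x x'"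
proof (rule ccontr)
  assume "\<not> ?thesis"
  then have "\<forall>m. \<exists>x'. x' \<in> X \<and> agree m (\<phi> x) (\<phi> x') \<and> agree K x x' \<and> \<not> agree k x x'" by blast
  from choice[OF this] obtain s where s0: "\<forall>m. s m \<in> X \<and> agree m (\<phi> x) (\<phi> (s m)) \<and> agree K x (s m) \<and> \<not> agree k x (s m)" by blast
  have s: "\<And>m. s m \<in> X \<and> agree m (\<phi> x) (\<phi> (s m)) \<and> agree K x (s m) \<and> \<not> agree k x (s m)" using s0 by blast
  obtain z where z: "\<forall>k N. \<exists>n\<ge>N. agree k (s n) z" using cluster by blast
  have cX: "closed_full X" using X unfolding shift_space_def by blast
  have sX: "\<forall>n. s n \<in> X" using s0 by blast
  have zX: "z \<in> X" using cluster_in[OF cX sX z] .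
  have sl: "\<forall>n. agree n (\<phi> x) (\<phi> (s n))" using s0 by blast
  have pz: "\<phi> z = \<phi> x" using limit_img[OF X Y d code card sX zX z sl] .
  obtain n where "agree K (s n) z" using z by blast
  then have "agree K x z" using s[of n] agree_trans by blast
  then have "z = x" using sepD[OF zX xX pz] agree_sym by blast
  obtain n' where "agree k (s n') z" using z by blast
  then show False using s[of n'] \<open>z = x\<close> agree_sym by blast
qed

lemma enc_props:
  assumes yY: "y \<in> Y"
  shows "length (encL (patK K ` fib y)) = d \<and> distinct (encL (patK K ` fib y))
     \<and> set (encL (patK K ` fib y)) = to_nat ` patK K ` fib y"
proof -
  have f: "finite (to_nat ` patK K ` fib y)" using card_pat[OF yY] by blast
  have io: "inj_on to_nat (patK K ` fib y)" using inj_to_nat by (rule inj_on_subset) simp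
  have "card (to_nat ` patK K ` fib y) = card (patK K ` fib y)" by (rule card_image[OF io])
  then have c: "card (to_nat ` patK K ` fib y) = d" using card_pat[OF yY] by simp
  have "length (encL (patK K ` fib y)) = d" unfolding encL_def using c by simp
  moreover have "distinct (encL (patK K ` fib y))" unfolding encL_def by simp
  moreover have "set (encL (patK K ` fib y)) = to_nat ` patK K ` fib y" unfolding encL_def using f by simp
  ultimately show ?thesis by blast
qed

lemma secf_char:
  assumes yY: "y \<in> Y" and x: "x \<in> fib y" "to_nat (patK K x) = encL (patK K ` fib y) ! (i - 1)"
  shows "secf X \<phi> K i y = x"
  unfolding secf_def
proof (rule the_equality)
  show "x \<in> fib y \<and> to_nat (patK K x) = encL (patK K ` fib y) ! (i - 1)" using x by blast
next
  fix x' assume "x' \<in> fib y \<and> to_nat (patK K x') = encL (patK K ` fib y) ! (i - 1)"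
  then have "to_nat (patK K x') = to_nat (patK K x)" "x' \<in> fib y" using x by auto
  then have "patK K x' = patK K x" "x' \<in> fib y" using injD[OF inj_to_nat] by blast+
  then show "x' = x" using x sepD by (auto simp: patK_eq)
qed

lemma secf_props:
  assumes yY: "y \<in> Y" and i: "i \<in> {1..d}"
  shows "secf X \<phi> K i y \<in> fib y \<and> to_nat (patK K (secf X \<phi> K i y)) = encL (patK K ` fib y) ! (i - 1)"
proof -
  have "i - 1 < length (encL (patK K ` fib y))" using enc_props[OF yY] i by auto
  then have "encL (patK K ` fib y) ! (i - 1) \<in> set (encL (patK K ` fib y))" by (rule nth_mem)
  then have "encL (patK K ` fib y) ! (i - 1) \<in> to_nat ` patK K ` fib y"
    using enc_props[OF yY] by simp
  then obtain pp where pp: "pp \<in> patK K ` fib y" "encL (patK K ` fib y) ! (i - 1) = to_nat pp" by (rule imageE)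
  from pp(1) obtain x where x0: "x \<in> fib y" "pp = patK K x" by (rule imageE)
  have x: "x \<in> fib y" "to_nat (patK K x) = encL (patK K ` fib y) ! (i - 1)" using x0 pp(2) by simp_all
  then show ?thesis using secf_char[OF yY x] by simp
qed

lemma L_D:
  "\<exists>f. (\<forall>i\<in>{1..d}. cross_section X Y \<phi> (f i))
               \<and> (\<forall>i\<in>{1..d}. \<forall>j\<in>{1..d}. i \<noteq> j \<longrightarrow> f i ` Y \<inter> f j ` Y = {})
               \<and> (\<Union>i\<in>{1..d}. f i ` Y) = X"
proof (intro exI conjI)
  let ?f = "secf X \<phi> K"
  show cs: "\<forall>i\<in>{1..d}. cross_section X Y \<phi> (?f i)"
  proof
    fix i assume i: "i \<in> {1..d}"
    show "cross_section X Y \<phi> (?f i)" unfolding cross_section_def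
    proof (intro conjI)
      show "?f i ` Y \<subseteq> X" using secf_props i by blast
      show "\<forall>y\<in>Y. \<phi> (?f i y) = y" using secf_props i by blast
      show "cont_on Y (?f i)" unfolding cont_on_def
      proof (intro ballI allI)
        fix y k assume yY: "y \<in> Y"
        obtain m1 where m1: "\<forall>y'\<in>Y. agree m1 y y' \<longrightarrow> patK K ` fib y' = patK K ` fib y" using E_loc[OF yY] by blast
        have xX: "?f i y \<in> X" and px: "\<phi> (?f i y) = y" using secf_props[OF yY i] by auto
        obtain m2 where m2: "\<forall>x'\<in>X. agree m2 (\<phi> (?f i y)) (\<phi> x') \<and> agree K (?f i y) x' \<longrightarrow> agree k (?f i y) x'"
          using P_loc[OF xX] by blast
        show "\<exists>m. \<forall>y'\<in>Y. agree m y y' \<longrightarrow> agree k (?f i y) (?f i y')"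
        proof (intro exI[of _ "max m1 m2"] ballI impI)
          fix y' assume y': "y' \<in> Y" "agree (max m1 m2) y y'"
          have a1: "agree m1 y y'" "agree m2 y y'" using y'(2) agree_mono by (meson max.cobounded1 max.cobounded2)+
          have "patK K ` fib y' = patK K ` fib y" using m1 y' a1 by blast
          then have "to_nat (patK K (?f i y')) = to_nat (patK K (?f i y))"
            using secf_props[OF yY i] secf_props[OF y'(1) i] by simp
          then have "patK K (?f i y') = patK K (?f i y)" by (rule injD[OF inj_to_nat])
          then have "agree K (?f i y') (?f i y)" by (simp add: patK_eq)
          then have g1: "agree K (?f i y) (?f i y')" by (rule agree_sym)
          have g2: "?f i y' \<in> X" "\<phi> (?f i y') = y'" using secf_props[OF y'(1) i] by auto
          have g3: "agree m2 (\<phi> (?f i y)) (\<phi> (?f i y'))" using a1(2) px g2(2) by simp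
          show "agree k (?f i y) (?f i y')" using m2 g1 g2(1) g3 by blast
        qed
      qed
    qed
  qed
  show "\<forall>i\<in>{1..d}. \<forall>j\<in>{1..d}. i \<noteq> j \<longrightarrow> ?f i ` Y \<inter> ?f j ` Y = {}"
  proof (intro ballI impI)
    fix i j assume i: "i \<in> {1..d}" and j: "j \<in> {1..d}" and ij: "i \<noteq> j"
    show "?f i ` Y \<inter> ?f j ` Y = {}"
    proof (rule ccontr)
      assume "?f i ` Y \<inter> ?f j ` Y \<noteq> {}"
      then obtain y y' where yy: "y \<in> Y" "y' \<in> Y" "?f i y = ?f j y'" by blast
      have "y = y'" using secf_props[OF yy(1) i] secf_props[OF yy(2) j] yy(3) by auto
      then have "encL (patK K ` fib y) ! (i - 1) = encL (patK K ` fib y) ! (j - 1)"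
        using secf_props[OF yy(1) i] secf_props[OF yy(1) j] yy(3) by simp
      moreover have "i - 1 < length (encL (patK K ` fib y))" "j - 1 < length (encL (patK K ` fib y))"
        using enc_props[OF yy(1)] i j by auto
      ultimately have "i - 1 = j - 1" using enc_props[OF yy(1)] nth_eq_iff_index_eq by blast
      then show False using i j ij by auto
    qed
  qed
  show "(\<Union>i\<in>{1..d}. ?f i ` Y) = X"
  proof
    show "(\<Union>i\<in>{1..d}. ?f i ` Y) \<subseteq> X" using secf_props by blast
    show "X \<subseteq> (\<Union>i\<in>{1..d}. ?f i ` Y)"
    proof
      fix x assume xX: "x \<in> X"
      define y where "y = \<phi> x"
      have yY: "y \<in> Y" using phiY[OF X Y d code card xX] y_def by simp
      have xf: "x \<in> fib y" using xX y_def by simp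
      have "to_nat (patK K x) \<in> to_nat ` patK K ` fib y" using xf by (intro imageI)
      then have "to_nat (patK K x) \<in> set (encL (patK K ` fib y))" using enc_props[OF yY] by simp
      then obtain t where t: "t < length (encL (patK K ` fib y))" "encL (patK K ` fib y) ! t = to_nat (patK K x)"
        unfolding in_set_conv_nth by blast
      have i: "Suc t \<in> {1..d}" using t enc_props[OF yY] by auto
      have "?f (Suc t) y = x" using secf_char[OF yY, of x "Suc t"] xX y_def t by simp
      then show "x \<in> (\<Union>i\<in>{1..d}. ?f i ` Y)" using i yY by blast
    qed
  qed
qed

end
theorem proposition4p6:
  fixes X :: "(int \<Rightarrow> 'a::finite) set" and Y :: "(int \<Rightarrow> 'b::finite) set"
    and \<phi> :: "(int \<Rightarrow> 'a) \<Rightarrow> (int \<Rightarrow> 'b)" and d :: nat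
  assumes "shift_space X" and "shift_space Y" and "d \<ge> 1"
    and "is_code X Y \<phi>"
    and "\<forall>y\<in>Y. card {x\<in>X. \<phi> x = y} = d"
  shows "(open_map X Y \<phi> \<longleftrightarrow> bi_closing X \<phi>)
       \<and> (bi_closing X \<phi> \<longleftrightarrow>
            (\<exists>f. (\<forall>i\<in>{1..d}. cross_section X Y \<phi> (f i))
               \<and> (\<forall>i\<in>{1..d}. \<forall>j\<in>{1..d}. i \<noteq> j \<longrightarrow> f i ` Y \<inter> f j ` Y = {})
               \<and> (\<Union>i\<in>{1..d}. f i ` Y) = X))
       \<and> ((\<exists>f. (\<forall>i\<in>{1..d}. cross_section X Y \<phi> (f i))
               \<and> (\<forall>i\<in>{1..d}. \<forall>j\<in>{1..d}. i \<noteq> j \<longrightarrow> f i ` Y \<inter> f j ` Y = {})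
               \<and> (\<Union>i\<in>{1..d}. f i ` Y) = X)
          \<longleftrightarrow> (\<forall>x\<in>X. \<exists>f. cross_section X Y \<phi> f \<and> x \<in> f ` Y))"
proof -
  note A = assms
  let ?C3 = "\<exists>f. (\<forall>i\<in>{1..d}. cross_section X Y \<phi> (f i))
               \<and> (\<forall>i\<in>{1..d}. \<forall>j\<in>{1..d}. i \<noteq> j \<longrightarrow> f i ` Y \<inter> f j ` Y = {})
               \<and> (\<Union>i\<in>{1..d}. f i ` Y) = X"
  let ?C4 = "\<forall>x\<in>X. \<exists>f. cross_section X Y \<phi> f \<and> x \<in> f ` Y"
  have oS: "open_map X Y \<phi> \<Longrightarrow> \<exists>K. SEP X \<phi> K" using L_C[OF A] by blast
  have bS: "bi_closing X \<phi> \<Longrightarrow> \<exists>K. SEP X \<phi> K" using L_A[OF A] by blast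
  have Sb: "SEP X \<phi> K \<Longrightarrow> bi_closing X \<phi>" for K using L_B[OF A] by blast
  have S3: "SEP X \<phi> K \<Longrightarrow> (\<exists>f. (\<forall>i\<in>{1..d}. cross_section X Y \<phi> (f i))
               \<and> (\<forall>i\<in>{1..d}. \<forall>j\<in>{1..d}. i \<noteq> j \<longrightarrow> f i ` Y \<inter> f j ` Y = {})
               \<and> (\<Union>i\<in>{1..d}. f i ` Y) = X)" for K using L_D[OF A] by blast
  have e34: "(\<exists>f. (\<forall>i\<in>{1..d}. cross_section X Y \<phi> (f i))
               \<and> (\<forall>i\<in>{1..d}. \<forall>j\<in>{1..d}. i \<noteq> j \<longrightarrow> f i ` Y \<inter> f j ` Y = {})
               \<and> (\<Union>i\<in>{1..d}. f i ` Y) = X) \<Longrightarrow> (\<forall>x\<in>X. \<exists>f. cross_section X Y \<phi> f \<and> x \<in> f ` Y)"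
    using L_E[OF A] by blast
  have e41: "(\<forall>x\<in>X. \<exists>f. cross_section X Y \<phi> f \<and> x \<in> f ` Y) \<Longrightarrow> open_map X Y \<phi>"
    using L_F[OF A] by blast
  have i12: "open_map X Y \<phi> \<longleftrightarrow> bi_closing X \<phi>"
  proof
    assume "open_map X Y \<phi>" then obtain K where "SEP X \<phi> K" using oS by blast
    then show "bi_closing X \<phi>" by (rule Sb)
  next
    assume "bi_closing X \<phi>" then obtain K where "SEP X \<phi> K" using bS by blast
    then show "open_map X Y \<phi>" by (intro e41 e34 S3)
  qed
  have i23: "bi_closing X \<phi> \<longleftrightarrow> ?C3"
  proof
    assume "bi_closing X \<phi>" then obtain K where "SEP X \<phi> K" using bS by blast
    then show ?C3 by (rule S3)
  next
    assume ?C3 then have "open_map X Y \<phi>" by (intro e41 e34)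
    then show "bi_closing X \<phi>" using i12 by blast
  qed
  have i34: "?C3 \<longleftrightarrow> ?C4"
  proof
    assume ?C3 then show ?C4 by (rule e34)
  next
    assume ?C4 then have "open_map X Y \<phi>" by (rule e41)
    then show ?C3 using i12 i23 by blast
  qed
  show ?thesis using i12 i23 i34 by blast
qed

end
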